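(* Consider the two-armed Gaussian bandit with two candidate models described in the context, under disagreement $\phi(\nu)=1$, $\phi(\gamma)=2$, with $\Delta_1>0>\Delta_2$. Then the pairs $(1,\delta_\nu)$ and $(2,\delta_\gamma)$ are strict Berk–Nash equilibria: for each pair $(a^*,\mu^* )$, the action $a^*$ is the unique maximizer of $\sum_{\theta}\mu^*(\theta)\theta_a$ over $a\in\{1,2\}$, and $\mu^*$ assigns probability one to the unique minimizer over $\theta\in\{\nu,\gamma\}$ of $\mathrm{KL}\big(g(\cdot\mid a^* )\,\|\,f_\theta(\cdot\mid a^* )\big)$.
   Context: Actions are $\mathcal A=\{1,2\}$. True environment: $R\mid A=i\sim g(\cdot\mid i)=\mathcal N(g(i),1)$. Two candidate models $\nu=(\nu_1,\nu_2)$, $\gamma=(\gamma_1,\gamma_2)\in\mathbb R^2$; under model $\theta$, $R\mid A=i\sim f_\theta(\cdot\mid i)=\mathcal N(\theta_i,1)$; $\phi(\theta)=\arg\max_i\theta_i$ (assumed unique). $\Delta_i:=\mathbb E_{R\sim g(\cdot\mid i)}[\log f_\nu(R\mid i)-\log f_\gamma(R\mid i)]=\mathrm{KL}(g(\cdot\mid i)\|f_\gamma(\cdot\mid i))-\mathrm{KL}(g(\cdot\mid i)\|f_\nu(\cdot\mid i))$. $\delta_\theta$ denotes the point-mass belief on model $\theta$. *)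

theory Defs
  imports "HOL-Probability.Probability"
begin

text \<open>Actions are 1 and 2 (type nat). A model theta assigns a mean reward
theta i to action i; under model theta, R | A = i ~ N(theta i, 1).
The true environment g likewise gives R | A = i ~ N(g i, 1).\<close>

definition actions :: "nat set" where
  "actions = {1, 2}"

definition phi :: "(nat \<Rightarrow> real) \<Rightarrow> nat" where
  "phi \<theta> = (THE i. i \<in> actions \<and> (\<forall>j\<in>actions. j \<noteq> i \<longrightarrow> \<theta> j < \<theta> i))"

definition gauss_KL :: "real \<Rightarrow> real \<Rightarrow> real" where
  "gauss_KL m t = (LINT r|lborel. normal_density m 1 r * ln (normal_density m 1 r / normal_density t 1 r))"

definition KL_act :: "(nat \<Rightarrow> real) \<Rightarrow> (nat \<Rightarrow> real) \<Rightarrow> nat \<Rightarrow> real" where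
  "KL_act g \<theta> a = gauss_KL (g a) (\<theta> a)"

definition Delta :: "(nat \<Rightarrow> real) \<Rightarrow> (nat \<Rightarrow> real) \<Rightarrow> (nat \<Rightarrow> real) \<Rightarrow> nat \<Rightarrow> real" where
  "Delta g \<nu> \<gamma> i = (LINT r|lborel. normal_density (g i) 1 r *
      (ln (normal_density (\<nu> i) 1 r) - ln (normal_density (\<gamma> i) 1 r)))"

definition strict_BNE ::
  "(nat \<Rightarrow> real) \<Rightarrow> (nat \<Rightarrow> real) set \<Rightarrow> nat \<Rightarrow> (nat \<Rightarrow> real) pmf \<Rightarrow> bool" where
  "strict_BNE g M a \<mu> \<longleftrightarrow>
     a \<in> actions \<and>
     (\<forall>b\<in>actions. b \<noteq> a \<longrightarrow>
        measure_pmf.expectation \<mu> (\<lambda>\<theta>. \<theta> b) < measure_pmf.expectation \<mu> (\<lambda>\<theta>. \<theta> a)) \<and>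
     (\<exists>\<theta>0\<in>M. (\<forall>\<theta>\<in>M. \<theta> \<noteq> \<theta>0 \<longrightarrow> KL_act g \<theta>0 a < KL_act g \<theta> a) \<and>
              measure_pmf.prob \<mu> {\<theta>0} = 1)"

end

theory Submission
  imports Defs
begin

lemma ln_nd: "ln (normal_density t 1 r) = - ln (sqrt (2*pi)) - (r-t)^2/2"
  unfolding normal_density_def by (simp add: ln_div)

lemma lin_int: "(LINT r|lborel. normal_density m 1 r * (a + b*r)) = a + b*m"
proof -
  have "(LINT r|lborel. normal_density m 1 r * (a + b*r))
      = (LINT r|lborel. a * normal_density m 1 r + b * (normal_density m 1 r * r))"
    by (simp add: algebra_simps)
  also have "\<dots> = a * (LINT r|lborel. normal_density m 1 r) + b * (LINT r|lborel. normal_density m 1 r * r)"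
    using integrable_normal_moment_nz_1[where \<mu>=m and \<sigma>=1] integrable_normal_density[where \<mu>=m and \<sigma>=1]
  proof -
    have i1: "integrable lborel (\<lambda>r. normal_density m 1 r * r)"
      using integrable_normal_moment_nz_1[where \<mu>=m and \<sigma>=1] by simp
    have i2: "integrable lborel (normal_density m 1)"
      using integrable_normal_density[where \<mu>=m and \<sigma>=1] by simp
    have "(LINT r|lborel. a * normal_density m 1 r + b * (normal_density m 1 r * r))
      = (LINT r|lborel. a * normal_density m 1 r) + (LINT r|lborel. b * (normal_density m 1 r * r))"
      by (rule Bochner_Integration.integral_add) (use i1 i2 in auto)
    then show ?thesis by simp
  qed
  also have "\<dots> = a + b*m" by (simp add: integral_normal_moment_nz_1)
  finally show ?thesis .
qed

lemma KL_closed: "gauss_KL m t = (m-t)^2/2"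
proof -
  have "gauss_KL m t = (LINT r|lborel. normal_density m 1 r * ((t^2-m^2)/2 + (m-t)*r))"
    unfolding gauss_KL_def
  proof (rule Bochner_Integration.integral_cong[OF refl])
    fix r
    have p: "normal_density m 1 r > 0" "normal_density t 1 r > 0" by (auto intro: normal_density_pos)
    have "ln (normal_density m 1 r / normal_density t 1 r) = (t^2-m^2)/2 + (m-t)*r"
      using p by (simp add: ln_div ln_nd power2_eq_square field_simps)
    then show "normal_density m 1 r * ln (normal_density m 1 r / normal_density t 1 r)
      = normal_density m 1 r * ((t^2-m^2)/2 + (m-t)*r)" by simp
  qed
  also have "\<dots> = (m-t)^2/2" by (simp only: lin_int) (simp add: power2_eq_square field_simps)
  finally show ?thesis .
qed

lemma Delta_closed: "Delta g \<nu> \<gamma> i = gauss_KL (g i) (\<gamma> i) - gauss_KL (g i) (\<nu> i)"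
proof -
  have "Delta g \<nu> \<gamma> i = (LINT r|lborel. normal_density (g i) 1 r * ((\<gamma> i^2-\<nu> i^2)/2 + (\<nu> i-\<gamma> i)*r))"
    unfolding Delta_def
    by (rule Bochner_Integration.integral_cong[OF refl]) (simp add: ln_nd power2_eq_square field_simps)
  also have "\<dots> = gauss_KL (g i) (\<gamma> i) - gauss_KL (g i) (\<nu> i)"
    by (simp only: lin_int KL_closed) (simp add: power2_eq_square field_simps)
  finally show ?thesis .
qed

lemma phi_2: "\<theta> 1 < \<theta> 2 \<Longrightarrow> phi \<theta> = 2"
  unfolding phi_def by (rule the_equality) (auto simp: actions_def)

lemma phi_1: "\<theta> 2 < \<theta> 1 \<Longrightarrow> phi \<theta> = 1"
  unfolding phi_def by (rule the_equality) (auto simp: actions_def)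

theorem corollary1:
  fixes g \<nu> \<gamma> :: "nat \<Rightarrow> real"
  assumes "\<nu> 1 \<noteq> \<nu> 2" and "\<gamma> 1 \<noteq> \<gamma> 2"
    and "phi \<nu> = 1" and "phi \<gamma> = 2"
    and "Delta g \<nu> \<gamma> 1 > 0" and "Delta g \<nu> \<gamma> 2 < 0"
  shows "strict_BNE g {\<nu>, \<gamma>} 1 (return_pmf \<nu>) \<and> strict_BNE g {\<nu>, \<gamma>} 2 (return_pmf \<gamma>)"
proof -
  have n: "\<nu> 2 < \<nu> 1" using assms(1,3) phi_2[of \<nu>] by force
  have c: "\<gamma> 1 < \<gamma> 2" using assms(2,4) phi_1[of \<gamma>] by force
  have ne: "\<nu> \<noteq> \<gamma>" using assms(3,4) by auto
  have k1: "KL_act g \<nu> 1 < KL_act g \<gamma> 1" using assms(5) by (simp add: KL_act_def Delta_closed)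
  have k2: "KL_act g \<gamma> 2 < KL_act g \<nu> 2" using assms(6) by (simp add: KL_act_def Delta_closed)
  have "strict_BNE g {\<nu>, \<gamma>} 1 (return_pmf \<nu>)"
    unfolding strict_BNE_def using n k1 ne
    by (auto simp: actions_def measure_return intro!: bexI[of _ \<nu>])
  moreover have "strict_BNE g {\<nu>, \<gamma>} 2 (return_pmf \<gamma>)"
    unfolding strict_BNE_def using c k2 ne
    by (auto simp: actions_def measure_return intro!: bexI[of _ \<gamma>])
  ultimately show ?thesis ..
qed

end
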